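(* Let $0\le\alpha<1$, $\theta>-\alpha$, $r\in[n]$, and $d_{n,r}=\binom nr(1-\alpha)_{r-1}(\theta+\alpha)_{n-r}\Gamma(\theta+1)/\Gamma(\theta+n)$. For the IBP with parameters $(\gamma,\alpha,\theta)$, $K_{n,r}\mid\gamma\sim\mathrm{Poisson}(\gamma d_{n,r})$; for the gamma mixture of IBPs with $\gamma\sim\mathrm{Gamma}(a,b)$, $K_{n,r}\sim\mathrm{NegBinomial}(a,(a/b)d_{n,r})$.
   Context: $(x)_m=\Gamma(x+m)/\Gamma(x)$; $[n]=\{1,\dots,n\}$; $g_n(\theta,\alpha)=\sum_{i=1}^n\frac{(\theta+\alpha)_{i-1}}{(\theta+1)_{i-1}}$. $K_{n,r}$ is the number of features displayed by exactly $r$ of the first $n$ individuals. The IBP with parameters $(\gamma,\alpha,\theta)$, $\gamma>0$, has exchangeable feature probability function (probability of any given ordered feature allocation of $[n]$ into $k$ nonempty sets of sizes $m_1,\dots,m_k$) $V_{n,k}\prod_{\ell=1}^k(1-\alpha)_{m_\ell-1}(\theta+\alpha)_{n-m_\ell}$ with $V_{n,k}=\frac1{k!}\{\gamma/(\theta+1)_{n-1}\}^ke^{-\gamma g_n(\theta,\alpha)}$; the gamma mixture takes $\gamma\sim\mathrm{Gamma}(a,b)$ (shape $a$, rate $b$). $\mathrm{NegBinomial}(n_0,\mu_0)$ has pmf $\binom{y+n_0-1}{y}p^{n_0}(1-p)^y$, $y\in\mathbb N_0$, $p=n_0/(\mu_0+n_0)$. *)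

theory Defs
  imports "HOL-Probability.Probability"
begin

text \<open>Ordered feature allocations of [n] = {1..n}: finite lists of nonempty subsets of {1..n}
  (repetitions allowed); the number of features is the length of the list.\<close>
definition ordered_feature_allocations :: "nat \<Rightarrow> nat set list set" where
  "ordered_feature_allocations n = {As. \<forall>A\<in>set As. A \<noteq> {} \<and> A \<subseteq> {1..n}}"

text \<open>K_{n,r}: number of features displayed by exactly r of the n individuals.\<close>
definition K_count :: "nat \<Rightarrow> nat set list \<Rightarrow> nat" where
  "K_count r As = length (filter (\<lambda>A. card A = r) As)"

definition g_fun :: "nat \<Rightarrow> real \<Rightarrow> real \<Rightarrow> real" where
  "g_fun n \<theta> \<alpha> = (\<Sum>i=1..n. pochhammer (\<theta> + \<alpha>) (i - 1) / pochhammer (\<theta> + 1) (i - 1))"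

definition V_ibp :: "real \<Rightarrow> real \<Rightarrow> real \<Rightarrow> nat \<Rightarrow> nat \<Rightarrow> real" where
  "V_ibp \<gamma> \<alpha> \<theta> n k =
     1 / fact k * (\<gamma> / pochhammer (\<theta> + 1) (n - 1)) ^ k * exp (- \<gamma> * g_fun n \<theta> \<alpha>)"

definition ibp_efpf :: "real \<Rightarrow> real \<Rightarrow> real \<Rightarrow> nat \<Rightarrow> nat set list \<Rightarrow> real" where
  "ibp_efpf \<gamma> \<alpha> \<theta> n As =
     V_ibp \<gamma> \<alpha> \<theta> n (length As) *
     prod_list (map (\<lambda>A. pochhammer (1 - \<alpha>) (card A - 1) * pochhammer (\<theta> + \<alpha>) (n - card A)) As)"

text \<open>Density of Gamma(a,b) (shape a, rate b) on (0,infinity).\<close>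
definition gamma_density :: "real \<Rightarrow> real \<Rightarrow> real \<Rightarrow> real" where
  "gamma_density a b x = (if 0 < x then b powr a / Gamma a * x powr (a - 1) * exp (- b * x) else 0)"

definition ibp_gamma_mix_efpf :: "real \<Rightarrow> real \<Rightarrow> real \<Rightarrow> real \<Rightarrow> nat \<Rightarrow> nat set list \<Rightarrow> real" where
  "ibp_gamma_mix_efpf a b \<alpha> \<theta> n As =
     (LINT \<gamma>|lborel. gamma_density a b \<gamma> * ibp_efpf \<gamma> \<alpha> \<theta> n As)"

definition d_coef :: "nat \<Rightarrow> nat \<Rightarrow> real \<Rightarrow> real \<Rightarrow> real" where
  "d_coef n r \<alpha> \<theta> = real (n choose r) * pochhammer (1 - \<alpha>) (r - 1) * pochhammer (\<theta> + \<alpha>) (n - r)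
     * Gamma (\<theta> + 1) / Gamma (\<theta> + real n)"

definition negbinomial_pmf :: "real \<Rightarrow> real \<Rightarrow> nat \<Rightarrow> real" where
  "negbinomial_pmf n0 \<mu>0 y =
     (let p = n0 / (\<mu>0 + n0) in ((real y + n0 - 1) gchoose y) * p powr n0 * (1 - p) ^ y)"

end

theory Submission
  imports Defs "HOL-Computational_Algebra.Formal_Power_Series"
begin


definition Tset :: "'a set \<Rightarrow> ('a \<Rightarrow> bool) \<Rightarrow> nat \<Rightarrow> nat \<Rightarrow> 'a list set" where
  "Tset S P k j = {As. set As \<subseteq> S \<and> length As = k \<and> length (filter P As) = j}"

lemma Tset_finite: "finite S \<Longrightarrow> finite (Tset S P k j)"
  unfolding Tset_def
  by (rule finite_subset[OF _ finite_lists_length_eq[of S k]]) auto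

lemma Tset_0: "Tset S P 0 j = (if j = 0 then {[]} else {})"
  unfolding Tset_def by auto

lemma Tset_Suc: "Tset S P (Suc k) j = (\<lambda>(A,As). A # As) `
   (SIGMA A:S. {As. set As \<subseteq> S \<and> length As = k \<and> length (filter P As) + (if P A then 1 else 0) = j})"
  unfolding Tset_def
  by (auto simp: length_Suc_conv image_iff split: if_splits)

lemma fiber_sum:
  fixes w :: "'a \<Rightarrow> real"
  assumes "finite S"
  shows "(\<Sum>As\<in>Tset S P k j. prod_list (map w As)) =
     real (k choose j) * (\<Sum>A\<in>{A\<in>S. P A}. w A) ^ j * (\<Sum>A\<in>{A\<in>S. \<not> P A}. w A) ^ (k - j)"
  using assms
proof (induction k arbitrary: j)
  case 0
  then show ?case by (simp add: Tset_0)
next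
  case (Suc k)
  define R where "R = (\<Sum>A\<in>{A\<in>S. P A}. w A)"
  define N where "N = (\<Sum>A\<in>{A\<in>S. \<not> P A}. w A)"
  define Q where "Q i = real (k choose i) * R ^ i * N ^ (k - i)" for i
  have IH: "\<And>i. (\<Sum>As\<in>Tset S P k i. prod_list (map w As)) = Q i"
    using Suc by (simp add: Q_def R_def N_def)
  define inner where "inner A = {As. set As \<subseteq> S \<and> length As = k \<and> length (filter P As) + (if P A then 1 else 0) = j}" for A
  have inj: "inj_on (\<lambda>(A,As). A # As) (SIGMA A:S. inner A)"
    by (auto simp: inj_on_def)
  have fin: "finite (inner A)" for A
    unfolding inner_def
    by (rule finite_subset[OF _ finite_lists_length_eq[of S k]]) (use Suc.prems in auto)
  have inner_eq: "inner A = (if P A then (if j = 0 then {} else Tset S P k (j - 1)) else Tset S P k j)" for A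
    unfolding inner_def Tset_def by auto
  have "(\<Sum>As\<in>Tset S P (Suc k) j. prod_list (map w As)) =
      (\<Sum>(A,As)\<in>(SIGMA A:S. inner A). prod_list (map w (A # As)))"
    unfolding Tset_Suc inner_def[symmetric]
    by (subst sum.reindex[OF inj]) (simp add: case_prod_unfold)
  also have "\<dots> = (\<Sum>A\<in>S. w A * (\<Sum>As\<in>inner A. prod_list (map w As)))"
    by (subst sum.Sigma[symmetric]) (use Suc.prems fin in \<open>auto simp: sum_distrib_left\<close>)
  also have "\<dots> = (\<Sum>A\<in>S. if P A then w A * (if j = 0 then 0 else Q (j - 1)) else w A * Q j)"
    by (intro sum.cong refl) (simp add: inner_eq IH)
  also have "\<dots> = R * (if j = 0 then 0 else Q (j - 1)) + N * Q j"
    by (subst sum.If_cases[OF Suc.prems]) (simp add: R_def N_def sum_distrib_right Collect_conj_eq Int_commute Compl_eq)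
  also have "\<dots> = real (Suc k choose j) * R ^ j * N ^ (Suc k - j)"
  proof (cases j)
    case 0
    then show ?thesis by (simp add: Q_def)
  next
    case (Suc j')
    show ?thesis
    proof (cases "j' < k")
      case True
      then obtain d where d: "k - j' = Suc d" by (metis Suc_diff_Suc)
      have d2: "k - Suc j' = d" using d by simp
      show ?thesis using Suc d d2 by (simp add: Q_def algebra_simps)
    next
      case False
      then show ?thesis using Suc by (simp add: Q_def algebra_simps)
    qed
  qed
  finally show ?case by (simp add: R_def N_def)
qed

lemma grouped_has_sum:
  fixes w :: "'a \<Rightarrow> real" and \<phi> :: "nat \<Rightarrow> real"
  assumes S: "finite S" and w: "\<And>A. A \<in> S \<Longrightarrow> 0 \<le> w A" and \<phi>: "\<And>k. 0 \<le> \<phi> k"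
    and L: "(\<lambda>k. \<phi> k * (real (k choose j) * (\<Sum>A\<in>{A\<in>S. P A}. w A) ^ j
                 * (\<Sum>A\<in>{A\<in>S. \<not> P A}. w A) ^ (k - j))) sums L"
  shows "((\<lambda>As. \<phi> (length As) * prod_list (map w As)) has_sum L)
           {As. set As \<subseteq> S \<and> length (filter P As) = j}"
proof -
  define R where "R = (\<Sum>A\<in>{A\<in>S. P A}. w A)"
  define N where "N = (\<Sum>A\<in>{A\<in>S. \<not> P A}. w A)"
  define f where "f = (\<lambda>(k::nat, As). \<phi> k * prod_list (map w As))"
  define g where "g k = \<phi> k * (real (k choose j) * R ^ j * N ^ (k - j))" for k
  have R0: "0 \<le> R" unfolding R_def by (rule sum_nonneg) (use w in auto)
  have N0: "0 \<le> N" unfolding N_def by (rule sum_nonneg) (use w in auto)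
  have fib: "((\<lambda>As. f (k, As)) has_sum g k) (Tset S P k j)" for k
  proof -
    have "((\<lambda>As. f (k, As)) has_sum (\<Sum>As\<in>Tset S P k j. f (k, As))) (Tset S P k j)"
      by (rule has_sum_finite[OF Tset_finite[OF S]])
    also have "(\<Sum>As\<in>Tset S P k j. f (k, As)) = g k"
      unfolding f_def g_def R_def N_def using fiber_sum[OF S, of w P k j]
      by (simp add: sum_distrib_left[symmetric])
    finally show ?thesis .
  qed
  have gs: "(g has_sum L) UNIV"
  proof (rule sums_nonneg_imp_has_sum)
    have "g = (\<lambda>k. \<phi> k * (real (k choose j) * (\<Sum>A\<in>{A\<in>S. P A}. w A) ^ j
                 * (\<Sum>A\<in>{A\<in>S. \<not> P A}. w A) ^ (k - j)))"
      by (rule ext) (simp add: g_def R_def N_def)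
    then show "g sums L" using L by simp
    show "0 \<le> g k" for k using \<phi> R0 N0 by (simp add: g_def)
  qed
  have fnn: "0 \<le> f (k, As)" if "As \<in> Tset S P k j" for k As
    using that \<phi>[of k] w unfolding f_def Tset_def
    by (auto intro!: mult_nonneg_nonneg prod_list_nonneg simp: subset_iff)
  have summ: "f summable_on Sigma UNIV (\<lambda>k. Tset S P k j)"
    by (rule summable_on_SigmaI[OF fib]) (use gs fnn in \<open>auto simp: has_sum_iff\<close>)
  have fS: "(f has_sum L) (Sigma UNIV (\<lambda>k. Tset S P k j))"
    by (rule has_sum_SigmaI[OF fib gs summ])
  have img: "{As. set As \<subseteq> S \<and> length (filter P As) = j} = snd ` Sigma UNIV (\<lambda>k. Tset S P k j)"
    unfolding Tset_def by (auto simp: image_iff)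
  have inj: "inj_on snd (Sigma UNIV (\<lambda>k. Tset S P k j))"
    unfolding Tset_def by (auto simp: inj_on_def)
  have eq: "((\<lambda>As. \<phi> (length As) * prod_list (map w As)) \<circ> snd) x = f x"
    if "x \<in> Sigma UNIV (\<lambda>k. Tset S P k j)" for x
    using that unfolding f_def Tset_def by auto
  show ?thesis
    unfolding img has_sum_reindex[OF inj]
    using fS has_sum_cong eq by blast
qed



lemma poch_gchoose: "pochhammer (x::real) k = (-1) ^ k * fact k * ((-x) gchoose k)"
  by (simp add: gbinomial_pochhammer)

lemma poch_vandermonde:
  fixes x y :: real
  shows "(\<Sum>k=0..n. real (n choose k) * pochhammer x k * pochhammer y (n - k)) = pochhammer (x + y) n"
proof -
  have "(\<Sum>k=0..n. real (n choose k) * pochhammer x k * pochhammer y (n - k)) =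
        (\<Sum>k=0..n. (-1) ^ n * fact n * (((-x) gchoose k) * ((-y) gchoose (n - k))))"
  proof (intro sum.cong refl)
    fix k assume k: "k \<in> {0..n}"
    then have kn: "k \<le> n" by simp
    have "real (n choose k) = fact n / (fact k * fact (n - k))"
      using binomial_fact[OF kn] by simp
    moreover have "(-1::real) ^ k * (-1) ^ (n - k) = (-1) ^ n"
      using kn by (simp add: power_add[symmetric])
    ultimately show "real (n choose k) * pochhammer x k * pochhammer y (n - k) =
        (-1) ^ n * fact n * (((-x) gchoose k) * ((-y) gchoose (n - k)))"
      by (simp add: poch_gchoose[of x] poch_gchoose[of y] field_simps)
  qed
  also have "\<dots> = (-1) ^ n * fact n * ((-x + -y) gchoose n)"
    by (simp add: sum_distrib_left[symmetric] gbinomial_Vandermonde)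
  also have "\<dots> = pochhammer (x + y) n"
    by (simp add: poch_gchoose[of "x+y"])
  finally show ?thesis .
qed

definition Fp :: "real \<Rightarrow> real \<Rightarrow> nat \<Rightarrow> real" where
  "Fp x y n = (\<Sum>i<n. real (n choose Suc i) * pochhammer x i * pochhammer y (n - Suc i))"

lemma Fp_Suc: "Fp x y (Suc n) = (x + y + real n - 1) * Fp x y n + pochhammer y n"
proof -
  define V where "V = (\<Sum>k=0..n. real (n choose k) * pochhammer x k * pochhammer y (n - k))"
  have V: "V = pochhammer (x + y) n" unfolding V_def by (rule poch_vandermonde)
  have "Fp x y (Suc n) = (\<Sum>i<Suc n. real (n choose i) * pochhammer x i * pochhammer y (n - i))
       + (\<Sum>i<Suc n. real (n choose Suc i) * pochhammer x i * pochhammer y (n - i))"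
    unfolding Fp_def by (simp add: sum.distrib[symmetric] algebra_simps)
  also have "(\<Sum>i<Suc n. real (n choose i) * pochhammer x i * pochhammer y (n - i)) = V"
    unfolding V_def by (simp add: atLeast0AtMost lessThan_Suc_atMost)
  also have "(\<Sum>i<Suc n. real (n choose Suc i) * pochhammer x i * pochhammer y (n - i))
      = (\<Sum>i<n. real (n choose Suc i) * pochhammer x i * pochhammer y (n - i))"
    by simp
  also have "\<dots> = (\<Sum>i<n. (x + y + real n - 1) * (real (n choose Suc i) * pochhammer x i * pochhammer y (n - Suc i))
                   - real (n choose Suc i) * pochhammer x (Suc i) * pochhammer y (n - Suc i))"
  proof (intro sum.cong refl)
    fix i assume "i \<in> {..<n}"
    then have i: "i < n" by simp
    then have e: "n - i = Suc (n - Suc i)" by simp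
    have r: "real (n - Suc i) = real n - real i - 1" using i by (simp add: of_nat_diff)
    show "real (n choose Suc i) * pochhammer x i * pochhammer y (n - i) =
      (x + y + real n - 1) * (real (n choose Suc i) * pochhammer x i * pochhammer y (n - Suc i))
      - real (n choose Suc i) * pochhammer x (Suc i) * pochhammer y (n - Suc i)"
      unfolding e pochhammer_Suc r by (simp add: algebra_simps)
  qed
  also have "\<dots> = (x + y + real n - 1) * Fp x y n
      - (\<Sum>i<n. real (n choose Suc i) * pochhammer x (Suc i) * pochhammer y (n - Suc i))"
    unfolding Fp_def by (simp add: sum_subtractf sum_distrib_left)
  also have "(\<Sum>i<n. real (n choose Suc i) * pochhammer x (Suc i) * pochhammer y (n - Suc i)) = V - pochhammer y n"
  proof -
    have "V = (\<Sum>k<Suc n. real (n choose k) * pochhammer x k * pochhammer y (n - k))"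
      unfolding V_def by (simp add: atLeast0AtMost lessThan_Suc_atMost)
    also have "\<dots> = pochhammer y n + (\<Sum>i<n. real (n choose Suc i) * pochhammer x (Suc i) * pochhammer y (n - Suc i))"
      by (subst sum.lessThan_Suc_shift) simp
    finally show ?thesis by simp
  qed
  finally show ?thesis by simp
qed

lemma Fp_eq:
  fixes x y :: real
  assumes "x + y > 0"
  shows "Fp x y (Suc n) = pochhammer (x + y) n *
           (\<Sum>i=1..Suc n. pochhammer y (i - 1) / pochhammer (x + y) (i - 1))"
proof (induction n)
  case 0
  then show ?case by (simp add: Fp_def)
next
  case (Suc n)
  have nz: "pochhammer (x + y) m \<noteq> 0" for m
    using assms by (simp add: pochhammer_eq_0_iff)
  have "Fp x y (Suc (Suc n)) = (x + y + real n) * Fp x y (Suc n) + pochhammer y (Suc n)"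
    by (simp add: Fp_Suc)
  also have "\<dots> = pochhammer (x + y) (Suc n) *
           (\<Sum>i=1..Suc (Suc n). pochhammer y (i - 1) / pochhammer (x + y) (i - 1))"
    unfolding Suc sum.atLeast1_atMost_eq
    using nz[of "Suc n"] by (simp add: pochhammer_Suc field_simps)
  finally show ?case .
qed



lemma gamma_int:
  fixes s B :: real
  assumes s: "s > 0" and B: "B > 0"
  shows "has_bochner_integral lborel (\<lambda>t. if 0 < t then t powr (s - 1) * exp (- (B * t)) else 0)
           (Gamma s / B powr s)"
proof -
  define h where "h = (\<lambda>t::real. if 0 < t then t powr (s - 1) * exp (- (B * t)) else 0)"
  define f where "f = (\<lambda>t::real. ennreal (indicator {0..} t * t powr (s - 1) / exp t))"
  have hm: "h \<in> borel_measurable lborel" unfolding h_def by measurable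
  have fm: "f \<in> borel_measurable borel" unfolding f_def by measurable
  have "ennreal (Gamma s) = (\<integral>\<^sup>+t. f t \<partial>lborel)"
    unfolding f_def by (rule Gamma_conv_nn_integral_real[OF s])
  also have "\<dots> = ennreal \<bar>B\<bar> * (\<integral>\<^sup>+x. f (0 + B * x) \<partial>lborel)"
    by (rule nn_integral_real_affine[OF fm]) (use B in simp)
  also have "(\<lambda>x. f (0 + B * x)) = (\<lambda>x. ennreal (B powr (s - 1)) * ennreal (h x))"
  proof
    fix x :: real
    show "f (0 + B * x) = ennreal (B powr (s - 1)) * ennreal (h x)"
    proof (cases "0 < x")
      case True
      then show ?thesis using B
        by (simp add: f_def h_def ennreal_mult[symmetric] powr_mult divide_inverse exp_minus)
    next
      case False
      then have "B * x \<le> 0" using B by (simp add: mult_nonneg_nonpos)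
      then show ?thesis using False B
        by (cases "x = 0") (auto simp: f_def h_def indicator_def)
    qed
  qed
  also have "(\<integral>\<^sup>+x. ennreal (B powr (s - 1)) * ennreal (h x) \<partial>lborel) =
       ennreal (B powr (s - 1)) * (\<integral>\<^sup>+x. ennreal (h x) \<partial>lborel)"
    by (rule nn_integral_cmult) (use hm in simp)
  finally have eq0: "ennreal (Gamma s) = ennreal \<bar>B\<bar> * (ennreal (B powr (s - 1)) * (\<integral>\<^sup>+x. ennreal (h x) \<partial>lborel))" .
  have BB: "\<bar>B\<bar> * B powr (s - 1) = B powr s"
    using B by (simp add: powr_diff)
  have eq: "ennreal (Gamma s) = ennreal (B powr s) * (\<integral>\<^sup>+x. ennreal (h x) \<partial>lborel)"
    unfolding eq0 mult.assoc[symmetric] BB[symmetric] using B by (simp add: ennreal_mult)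
  have "(\<integral>\<^sup>+x. ennreal (h x) \<partial>lborel) = ennreal (Gamma s / B powr s)"
  proof -
    have Bp: "0 < B powr s" using B by simp
    have "ennreal (Gamma s / B powr s) = ennreal (Gamma s) * ennreal (1 / B powr s)"
      using Bp s by (simp add: ennreal_mult[symmetric] divide_inverse Gamma_real_pos less_imp_le)
    also have "\<dots> = (\<integral>\<^sup>+x. ennreal (h x) \<partial>lborel) * (ennreal (B powr s) * ennreal (1 / B powr s))"
      unfolding eq by (simp add: mult_ac)
    also have "ennreal (B powr s) * ennreal (1 / B powr s) = 1"
      using Bp by (simp add: ennreal_mult[symmetric])
    finally show ?thesis by simp
  qed
  moreover have "0 \<le> Gamma s / B powr s" using s B by (simp add: Gamma_real_pos less_imp_le)
  ultimately show ?thesis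
    unfolding h_def[symmetric]
    by (intro has_bochner_integral_nn_integral[OF hm]) (auto simp: h_def)
qed



lemma choose_shift: "real ((i + j) choose j) = fact (i + j) / (fact j * fact i)"
  using binomial_fact[of j "i + j", where 'a = real] by simp

lemma series1:
  fixes c R N E :: real
  shows "(\<lambda>k. 1 / fact k * c ^ k * E * (real (k choose j) * R ^ j * N ^ (k - j))) sums
           (E * (c * R) ^ j / fact j * exp (c * N))"
proof -
  define f where "f k = 1 / fact k * c ^ k * E * (real (k choose j) * R ^ j * N ^ (k - j))" for k
  have z: "(\<Sum>i<j. f i) = 0" by (intro sum.neutral) (simp add: f_def binomial_eq_0)
  have sh: "f (i + j) = (E * (c * R) ^ j / fact j) * ((c * N) ^ i / fact i)" for i
    unfolding f_def choose_shift by (simp add: field_simps power_add power_mult_distrib)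
  have "(\<lambda>i. (E * (c * R) ^ j / fact j) * ((c * N) ^ i / fact i)) sums ((E * (c * R) ^ j / fact j) * exp (c * N))"
    by (rule sums_mult) (use exp_converges[of "c * N"] in \<open>simp add: divide_inverse mult.commute\<close>)
  then have "(\<lambda>i. f (i + j)) sums ((E * (c * R) ^ j / fact j) * exp (c * N))"
    by (simp add: sh)
  then have "f sums ((E * (c * R) ^ j / fact j) * exp (c * N))"
    by (simp add: sums_iff_shift z)
  then show ?thesis by (simp add: f_def[abs_def])
qed

lemma negbin_series:
  fixes s v :: real
  assumes "0 \<le> v" "v < 1"
  shows "(\<lambda>i. pochhammer s i / fact i * v ^ i) sums ((1 - v) powr (- s))"
proof -
  have "(\<lambda>i. ((- s) gchoose i) * (- v) ^ i) sums (1 + - v) powr (- s)"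
    by (rule gen_binomial_real) (use assms in auto)
  moreover have "((- s) gchoose i) * (- v) ^ i = pochhammer s i / fact i * v ^ i" for i
  proof -
    have 1: "((- s) gchoose i) = (-1) ^ i * pochhammer s i / fact i"
      by (simp add: gbinomial_pochhammer)
    have 2: "(- v) ^ i = (-1) ^ i * v ^ i" by (rule power_minus)
    have 3: "(-1::real) ^ i * (-1) ^ i = 1"
      by (simp flip: power_mult_distrib)
    show ?thesis unfolding 1 2
      by (simp add: 3 mult.assoc mult.left_commute[of "(-1::real)^i"])
  qed
  ultimately show ?thesis by simp
qed

lemma series2:
  fixes a b P R N :: real and j :: nat
  assumes a: "a > 0" and b: "b > 0" and P: "P > 0" and R: "R > 0" and N: "N \<ge> 0"
  shows "(\<lambda>k. b powr a / Gamma a * Gamma (a + real k) / (b + (R + N) / P) powr (a + real k)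
            / (fact k * P ^ k) * (real (k choose j) * R ^ j * N ^ (k - j)))
         sums negbinomial_pmf a ((a / b) * (R / P)) j"
proof -
  define B where "B = b + (R + N) / P"
  define d where "d = R / P"
  define v where "v = N / (P * B)"
  have B: "B > 0" unfolding B_def using b P R N by (simp add: add_pos_nonneg)
  have d: "d > 0" unfolding d_def using P R by simp
  have v0: "0 \<le> v" unfolding v_def using N P B by simp
  have v1: "v < 1"
  proof -
    have "N / P < B" unfolding B_def using b P R by (simp add: add_divide_distrib add_pos_nonneg)
    then show ?thesis unfolding v_def using P B by (simp add: field_simps)
  qed
  define z where "z = a + real j"
  have z: "z > 0" unfolding z_def using a by simp
  have Gz: "Gamma z > 0" using z by (rule Gamma_real_pos)
  have Ga: "Gamma a > 0" using a by (rule Gamma_real_pos)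
  define K0 where "K0 = b powr a * Gamma z * R ^ j / (Gamma a * fact j * P ^ j * B powr z)"
  define f where "f k = b powr a / Gamma a * Gamma (a + real k) / B powr (a + real k)
            / (fact k * P ^ k) * (real (k choose j) * R ^ j * N ^ (k - j))" for k
  have z0: "(\<Sum>i<j. f i) = 0" by (intro sum.neutral) (simp add: f_def binomial_eq_0)
  have sh: "f (i + j) = K0 * (pochhammer z i / fact i * v ^ i)" for i
  proof -
    have g: "Gamma (a + real (i + j)) = Gamma z * pochhammer z i"
    proof -
      have "z \<notin> \<int>\<^sub>\<le>\<^sub>0" using z by (auto elim!: nonpos_Ints_cases)
      then have "pochhammer z i = Gamma (z + real i) / Gamma z" by (rule pochhammer_Gamma)
      then show ?thesis using Gz unfolding z_def by (simp add: field_simps)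
    qed
    have p: "B powr (a + real (i + j)) = B powr z * B ^ i"
      unfolding z_def using B by (simp add: powr_add powr_realpow)
    show ?thesis
      unfolding f_def g p choose_shift K0_def v_def
      using B P Ga Gz by (simp add: field_simps power_add power_mult_distrib)
  qed
  have "(\<lambda>i. K0 * (pochhammer z i / fact i * v ^ i)) sums (K0 * (1 - v) powr (- z))"
    by (rule sums_mult) (rule negbin_series[OF v0 v1])
  then have "(\<lambda>i. f (i + j)) sums (K0 * (1 - v) powr (- z))" by (simp add: sh)
  then have fs: "f sums (K0 * (1 - v) powr (- z))" by (simp add: sums_iff_shift z0)
  have PB: "P * B = P * b + R + N" unfolding B_def using P by (simp add: field_simps)
  have 1: "1 - v = (b + d) / B"
  proof -
    have "1 - v = (P * B - N) / (P * B)" unfolding v_def using P B by (simp add: field_simps)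
    also have "\<dots> = (P * b + R) / (P * B)" unfolding PB by simp
    also have "\<dots> = (b + d) / B" unfolding d_def using P B by (simp add: field_simps)
    finally show ?thesis .
  qed
  have p: "(a / ((a / b) * d + a)) = b / (d + b)"
  proof -
    have "(a / b) * d + a = a * (d + b) / b" using b by (simp add: field_simps)
    then show ?thesis using a b d by simp
  qed
  have p1: "1 - b / (d + b) = d / (d + b)" using b d by (simp add: field_simps)
  have gc: "(real j + a - 1) gchoose j = Gamma z / (Gamma a * fact j)"
  proof -
    have "(real j + a - 1) gchoose j = pochhammer a j / fact j"
      by (simp add: gbinomial_pochhammer')
    also have "pochhammer a j = Gamma z / Gamma a"
      unfolding z_def by (rule pochhammer_Gamma) (use a in \<open>auto elim!: nonpos_Ints_cases\<close>)
    finally show ?thesis by simp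
  qed
  have bd: "b + d > 0" using b d by simp
  have e1: "((b + d) / B) powr (- z) = B powr z / ((b + d) powr a * (b + d) ^ j)"
  proof -
    have "((b + d) / B) powr (- z) = 1 / ((b + d) powr z / B powr z)"
      using bd B by (simp add: powr_minus_divide powr_divide)
    also have "(b + d) powr z = (b + d) powr a * (b + d) ^ j"
      unfolding z_def using bd by (simp add: powr_add powr_realpow)
    finally show ?thesis by simp
  qed
  have e2: "(b / (d + b)) powr a = b powr a / (b + d) powr a"
    using b bd by (simp add: powr_divide add.commute)
  have e3: "R ^ j / P ^ j = d ^ j" unfolding d_def by (simp add: power_divide)
  have "K0 * (1 - v) powr (- z) = negbinomial_pmf a ((a / b) * (R / P)) j"
    unfolding negbinomial_pmf_def Let_def d_def[symmetric] p p1 gc 1 e1 e2 K0_def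
    using B bd Ga P by (simp add: field_simps power_divide d_def)
  with fs show ?thesis unfolding f_def[abs_def] B_def by simp
qed



theorem propositionS3:
  fixes \<alpha> \<theta> \<gamma> a b :: real and n r :: nat
  assumes "0 \<le> \<alpha>" and "\<alpha> < 1" and "\<theta> > - \<alpha>"
    and "r \<in> {1..n}"
    and "\<gamma> > 0" and "a > 0" and "b > 0"
  shows "(\<forall>j::nat. ((\<lambda>As. ibp_efpf \<gamma> \<alpha> \<theta> n As) has_sum
             pmf (poisson_pmf (\<gamma> * d_coef n r \<alpha> \<theta>)) j)
           {As \<in> ordered_feature_allocations n. K_count r As = j})
       \<and> (\<forall>j::nat. ((\<lambda>As. ibp_gamma_mix_efpf a b \<alpha> \<theta> n As) has_sum
             negbinomial_pmf a ((a / b) * d_coef n r \<alpha> \<theta>) j)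
           {As \<in> ordered_feature_allocations n. K_count r As = j})"
proof -
  note al0 = assms(1) and al1 = assms(2) and th = assms(3) and rn = assms(4)
    and ga = assms(5) and a = assms(6) and b = assms(7)
  have r1: "1 \<le> r" and rn': "r \<le> n" using rn by auto
  have n1: "1 \<le> n" using r1 rn' by simp
  have th1: "\<theta> + 1 > 0" using th al1 by simp
  have tha: "\<theta> + \<alpha> > 0" using th by simp
  have oma: "1 - \<alpha> > 0" using al1 by simp
  define P where "P = pochhammer (\<theta> + 1) (n - 1)"
  have P: "P > 0" unfolding P_def using th1 by (rule pochhammer_pos)
  define g where "g = g_fun n \<theta> \<alpha>"
  define w where "w A = pochhammer (1 - \<alpha>) (card A - 1) * pochhammer (\<theta> + \<alpha>) (n - card A)" for A :: "nat set"
  have wpos: "w A > 0" for A unfolding w_def using oma tha by (simp add: pochhammer_pos)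
  define S where "S = {A::nat set. A \<noteq> {} \<and> A \<subseteq> {1..n}}"
  have Sfin: "finite S" unfolding S_def by (rule finite_subset[of _ "Pow {1..n}"]) auto
  define Q where "Q = (\<lambda>A::nat set. card A = r)"
  define R where "R = (\<Sum>A\<in>{A\<in>S. Q A}. w A)"
  define N where "N = (\<Sum>A\<in>{A\<in>S. \<not> Q A}. w A)"
  have N0: "N \<ge> 0" unfolding N_def by (rule sum_nonneg) (use wpos in \<open>auto intro: less_imp_le\<close>)
  have setEq: "{As \<in> ordered_feature_allocations n. K_count r As = j} =
      {As. set As \<subseteq> S \<and> length (filter Q As) = j}" for j
    by (auto simp: ordered_feature_allocations_def K_count_def S_def Q_def)
  have layer: "(\<Sum>A\<in>{A\<in>S. card A = m}. w A) =
       real (n choose m) * (pochhammer (1 - \<alpha>) (m - 1) * pochhammer (\<theta> + \<alpha>) (n - m))"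
    if "m \<ge> 1" for m
  proof -
    have e: "{A\<in>S. card A = m} = {A. A \<subseteq> {1..n} \<and> card A = m}"
      unfolding S_def using that by auto
    have "(\<Sum>A\<in>{A\<in>S. card A = m}. w A) =
        (\<Sum>A\<in>{A. A \<subseteq> {1..n} \<and> card A = m}. pochhammer (1 - \<alpha>) (m - 1) * pochhammer (\<theta> + \<alpha>) (n - m))"
      unfolding e by (intro sum.cong refl) (simp add: w_def)
    also have "\<dots> = real (n choose m) * (pochhammer (1 - \<alpha>) (m - 1) * pochhammer (\<theta> + \<alpha>) (n - m))"
      using n_subsets[of "{1..n}" m] by simp
    finally show ?thesis .
  qed
  have R_eq: "R = real (n choose r) * (pochhammer (1 - \<alpha>) (r - 1) * pochhammer (\<theta> + \<alpha>) (n - r))"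
    unfolding R_def Q_def using layer[OF r1] .
  have R: "R > 0" unfolding R_eq using rn' oma tha by (simp add: pochhammer_pos)
  have tot: "R + N = (\<Sum>A\<in>S. w A)"
  proof -
    have "(\<Sum>A\<in>S. w A) = (\<Sum>A\<in>S. if Q A then w A else w A)" by simp
    also have "\<dots> = R + N" unfolding R_def N_def
      by (subst sum.If_cases[OF Sfin]) (simp add: Collect_conj_eq Int_commute Compl_eq)
    finally show ?thesis by simp
  qed
  have Sw: "(\<Sum>A\<in>S. w A) = Fp (1 - \<alpha>) (\<theta> + \<alpha>) n"
  proof -
    have sub: "card ` S \<subseteq> {1..n}"
    proof
      fix m assume "m \<in> card ` S"
      then obtain A where A: "A \<in> S" "m = card A" by auto
      have fA: "finite A" using A unfolding S_def by (auto intro: finite_subset)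
      have "card A \<le> card {1..n}" using A unfolding S_def by (intro card_mono) auto
      moreover have "card A \<noteq> 0" using A fA unfolding S_def by auto
      ultimately show "m \<in> {1..n}" using A by auto
    qed
    have "(\<Sum>A\<in>S. w A) = (\<Sum>m\<in>{1..n}. \<Sum>A\<in>{A\<in>S. card A = m}. w A)"
      using sum.group[OF Sfin _ sub, of w] by simp
    also have "\<dots> = (\<Sum>m\<in>{1..n}. real (n choose m) * (pochhammer (1 - \<alpha>) (m - 1) * pochhammer (\<theta> + \<alpha>) (n - m)))"
      by (intro sum.cong refl layer) auto
    also have "\<dots> = Fp (1 - \<alpha>) (\<theta> + \<alpha>) n"
      unfolding Fp_def by (simp add: sum.atLeast1_atMost_eq mult.assoc)
    finally show ?thesis .
  qed
  have FpEq: "Fp (1 - \<alpha>) (\<theta> + \<alpha>) n = P * g"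
  proof -
    have nn: "n = Suc (n - 1)" using n1 by simp
    have "Fp (1 - \<alpha>) (\<theta> + \<alpha>) (Suc (n - 1)) = pochhammer (1 - \<alpha> + (\<theta> + \<alpha>)) (n - 1) *
           (\<Sum>i=1..Suc (n - 1). pochhammer (\<theta> + \<alpha>) (i - 1) / pochhammer (1 - \<alpha> + (\<theta> + \<alpha>)) (i - 1))"
      by (rule Fp_eq) (use th1 in simp)
    then show ?thesis unfolding P_def g_def g_fun_def using nn
      by (simp add: add.commute)
  qed
  have g_eq: "g = (R + N) / P" using tot Sw FpEq P by simp
  have d_eq: "d_coef n r \<alpha> \<theta> = R / P"
  proof -
    have "\<theta> + 1 \<notin> \<int>\<^sub>\<le>\<^sub>0" using th1 by (auto elim!: nonpos_Ints_cases)
    then have "P = Gamma (\<theta> + 1 + real (n - 1)) / Gamma (\<theta> + 1)"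
      unfolding P_def by (rule pochhammer_Gamma)
    also have "\<theta> + 1 + real (n - 1) = \<theta> + real n" using n1 by (simp add: of_nat_diff)
    finally have PG: "P = Gamma (\<theta> + real n) / Gamma (\<theta> + 1)" .
    have G1: "Gamma (\<theta> + 1) > 0" using th1 by (rule Gamma_real_pos)
    show ?thesis unfolding d_coef_def R_eq PG using G1 by (simp add: field_simps)
  qed
  have part1: "((\<lambda>As. ibp_efpf \<gamma> \<alpha> \<theta> n As) has_sum
             pmf (poisson_pmf (\<gamma> * d_coef n r \<alpha> \<theta>)) j)
           {As \<in> ordered_feature_allocations n. K_count r As = j}" for j
  proof -
    define \<phi> where "\<phi> k = 1 / fact k * (\<gamma> / P) ^ k * exp (- \<gamma> * g)" for k
    have eff: "ibp_efpf \<gamma> \<alpha> \<theta> n As = \<phi> (length As) * prod_list (map w As)" for As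
      unfolding ibp_efpf_def V_ibp_def \<phi>_def P_def g_def w_def by simp
    have ser: "(\<lambda>k. \<phi> k * (real (k choose j) * R ^ j * N ^ (k - j))) sums
        (exp (- \<gamma> * g) * (\<gamma> / P * R) ^ j / fact j * exp (\<gamma> / P * N))"
      unfolding \<phi>_def by (rule series1)
    have pm: "pmf (poisson_pmf (\<gamma> * d_coef n r \<alpha> \<theta>)) j =
        exp (- \<gamma> * g) * (\<gamma> / P * R) ^ j / fact j * exp (\<gamma> / P * N)"
    proof -
      have pos: "0 < \<gamma> * (R / P)" using ga R P by simp
      have "exp (- \<gamma> * g) * exp (\<gamma> / P * N) = exp (- (\<gamma> * (R / P)))"
        unfolding g_eq exp_add[symmetric] using P by (simp add: field_simps)
      then show ?thesis unfolding d_eq pmf_poisson[OF pos]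
        by (simp add: field_simps)
    qed
    have wnn: "\<And>A. A \<in> S \<Longrightarrow> 0 \<le> w A" using wpos by (simp add: less_imp_le)
    have pnn: "\<And>k. 0 \<le> \<phi> k" unfolding \<phi>_def using ga P by simp
    show ?thesis unfolding setEq eff pm
      by (rule grouped_has_sum[OF Sfin wnn pnn]) (insert ser, unfold R_def N_def, assumption)
  qed
  have part2: "((\<lambda>As. ibp_gamma_mix_efpf a b \<alpha> \<theta> n As) has_sum
             negbinomial_pmf a ((a / b) * d_coef n r \<alpha> \<theta>) j)
           {As \<in> ordered_feature_allocations n. K_count r As = j}" for j
  proof -
    define B where "B = b + (R + N) / P"
    have B: "B > 0" unfolding B_def using b R N0 P by (simp add: add_pos_nonneg)
    define \<phi> where "\<phi> k = b powr a / Gamma a * Gamma (a + real k) / B powr (a + real k) / (fact k * P ^ k)" for k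
    have Ga: "Gamma a > 0" using a by (rule Gamma_real_pos)
    have eff: "ibp_gamma_mix_efpf a b \<alpha> \<theta> n As = \<phi> (length As) * prod_list (map w As)" for As
    proof -
      define k where "k = length As"
      define Pr where "Pr = prod_list (map w As)"
      define K where "K = b powr a / Gamma a * Pr / (fact k * P ^ k)"
      have pt: "gamma_density a b t * ibp_efpf t \<alpha> \<theta> n As =
          K * (if 0 < t then t powr (a + real k - 1) * exp (- (B * t)) else 0)" for t
      proof (cases "0 < t")
        case True
        have e1: "t powr (a - 1) * t ^ k = t powr (a + real k - 1)"
          using True by (simp add: powr_realpow[symmetric] powr_add[symmetric] algebra_simps)
        have e2: "exp (- b * t) * exp (- t * g) = exp (- (B * t))"
          unfolding B_def g_eq exp_add[symmetric] using P by (simp add: field_simps)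
        have "gamma_density a b t * ibp_efpf t \<alpha> \<theta> n As =
            K * ((t powr (a - 1) * t ^ k) * (exp (- b * t) * exp (- t * g)))"
          unfolding gamma_density_def ibp_efpf_def V_ibp_def K_def Pr_def k_def g_def P_def w_def
          using True by (simp add: field_simps power_divide)
        then show ?thesis unfolding e1 e2 using True by simp
      next
        case False
        then show ?thesis by (simp add: gamma_density_def)
      qed
      have hb: "has_bochner_integral lborel (\<lambda>t. gamma_density a b t * ibp_efpf t \<alpha> \<theta> n As)
          (K * (Gamma (a + real k) / B powr (a + real k)))"
        unfolding pt
        by (intro has_bochner_integral_mult_right)
           (use gamma_int[of "a + real k" B] a B in simp)
      have "ibp_gamma_mix_efpf a b \<alpha> \<theta> n As = K * (Gamma (a + real k) / B powr (a + real k))"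
        unfolding ibp_gamma_mix_efpf_def by (rule has_bochner_integral_integral_eq[OF hb])
      also have "\<dots> = \<phi> (length As) * prod_list (map w As)"
        unfolding K_def \<phi>_def k_def Pr_def by (simp add: field_simps)
      finally show ?thesis .
    qed
    have ser: "(\<lambda>k. \<phi> k * (real (k choose j) * R ^ j * N ^ (k - j))) sums
        negbinomial_pmf a ((a / b) * (R / P)) j"
      unfolding \<phi>_def B_def by (rule series2[OF a b P R N0])
    have wnn: "\<And>A. A \<in> S \<Longrightarrow> 0 \<le> w A" using wpos by (simp add: less_imp_le)
    have pnn: "\<And>k. 0 \<le> \<phi> k" unfolding \<phi>_def using Ga B a P
      by (auto intro!: divide_nonneg_nonneg mult_nonneg_nonneg simp: Gamma_real_pos less_imp_le)
    show ?thesis unfolding setEq eff d_eq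
      by (rule grouped_has_sum[OF Sfin wnn pnn]) (insert ser, unfold R_def N_def, assumption)
  qed
  show ?thesis using part1 part2 by blast
qed

end
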